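(* Let $\mathbb{S}$ be a locally finite (i.e. $\mathbb{S}\cap H$ is finite for every bounded $H\subset\mathbb{R}$), unbounded subset of $[0,\infty)$ with $0\in\mathbb{S}$. Let $(X_t)_{t\in\mathbb{N}}$ be an $\mathbb{S}$-valued process adapted to a filtration $(\mathcal{F}_t)_{t\in\mathbb{N}}$ with $\mathbb{P}[X_1=0]=1$. Assume that for each $x,y\in\mathbb{S}$ there exist $m(x,y)\in\mathbb{N}$ and $\varphi(x,y)>0$ such that $\mathbb{P}[X_{t+m(X_t,y)}=y\mid\mathcal{F}_t]\ge\varphi(X_t,y)$ a.s. for all $t\in\mathbb{N}$. Then $\limsup_{t\to\infty}X_t=\infty$ a.s. If in addition $\mathbb{P}[\eta_{n+1}<\infty\mid\tau_n<\infty]=\mathbb{P}[\eta_1<\infty]$ for all $n\in\mathbb{N}$, then exactly one of the following holds: (i) $\mathbb{P}[\eta_1<\infty]<1$ and $\lim_{t\to\infty}X_t=\infty$ a.s.; or (ii) $\mathbb{P}[\eta_1<\infty]=1$ and $\liminf_{t\to\infty}X_t=0$ a.s.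
   Context: $\mathbb{N}=\{1,2,\dots\}$. Return times to $0$: $\tau_0:=1$ and $\tau_n:=\min\{t>\tau_{n-1}:X_t=0\}$ for $n\in\mathbb{N}$ (with $\min\emptyset=\infty$); when $\tau_n<\infty$, $\eta_n:=\tau_n-\tau_{n-1}$ is the duration of the $n$th excursion (with $\eta_n=\infty$ otherwise). *)

theory Defs
  imports "HOL-Probability.Probability" "HOL-Library.Extended_Nat"
begin

text \<open>Return times to 0 (time index set is {1,2,...}; tau 0 = 1).
  Values in enat, with \<infinity> meaning "no such time".\<close>
fun ret_time :: "(nat \<Rightarrow> 'a \<Rightarrow> real) \<Rightarrow> nat \<Rightarrow> 'a \<Rightarrow> enat" where
  "ret_time X 0 \<omega> = 1"
| "ret_time X (Suc n) \<omega> =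
     (case ret_time X n \<omega> of
        \<infinity> \<Rightarrow> \<infinity>
      | enat s \<Rightarrow> (if \<exists>t>s. X t \<omega> = 0 then enat (LEAST t. t > s \<and> X t \<omega> = 0) else \<infinity>))"

definition exc_dur :: "(nat \<Rightarrow> 'a \<Rightarrow> real) \<Rightarrow> nat \<Rightarrow> 'a \<Rightarrow> enat" where
  "exc_dur X n \<omega> = (if ret_time X n \<omega> = \<infinity> then \<infinity>
                     else ret_time X n \<omega> - ret_time X (n - 1) \<omega>)"

definition locally_finite_set :: "real set \<Rightarrow> bool" where
  "locally_finite_set S \<longleftrightarrow> (\<forall>H. bounded H \<longrightarrow> finite (S \<inter> H))"

end

theory Submission
  imports Defs
begin


locale setting = prob_space M for M :: "'a measure" +
  fixes F :: "nat \<Rightarrow> 'a measure" and X :: "nat \<Rightarrow> 'a \<Rightarrow> real" and S :: "real set"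
    and m :: "real \<Rightarrow> real \<Rightarrow> nat" and \<phi> :: "real \<Rightarrow> real \<Rightarrow> real"
  assumes S_lf: "locally_finite_set S"
    and filt: "filtration (space M) F"
    and sub: "\<And>t. sigma_finite_subalgebra M (F t)"
    and adapted: "\<And>t. t \<ge> 1 \<Longrightarrow> X t \<in> borel_measurable (F t)"
    and vals: "\<And>t \<omega>. t \<ge> 1 \<Longrightarrow> \<omega> \<in> space M \<Longrightarrow> X t \<omega> \<in> S"
    and mphi: "\<forall>x\<in>S. \<forall>y\<in>S. m x y \<ge> 1 \<and> \<phi> x y > 0"
    and reach: "\<forall>y\<in>S. \<forall>t\<ge>1. AE \<omega> in M.
            real_cond_exp M (F t)
              (\<lambda>\<omega>'. indicator {\<omega>'' \<in> space M. X (t + m (X t \<omega>'') y) \<omega>'' = y} \<omega>') \<omega>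
            \<ge> \<phi> (X t \<omega>) y"
begin

lemma subalg: "subalgebra M (F t)"
  using sub[of t] by (simp add: sigma_finite_subalgebra_def)

lemma spaceF: "space (F t) = space M" using filtration.space_F[OF filt] .

lemma Xmeas: "t \<ge> 1 \<Longrightarrow> X t \<in> borel_measurable M"
  using measurable_from_subalg[OF subalg adapted] .

lemma XmeasF: assumes "1 \<le> u" "u \<le> t" shows "X u \<in> borel_measurable (F t)"
proof -
  have "subalgebra (F t) (F u)" using filtration.space_F[OF filt] filtration.sets_F_mono[OF filt \<open>u \<le> t\<close>]
    unfolding subalgebra_def by auto
  then show ?thesis using measurable_from_subalg adapted assms(1) by blast
qed

lemma setF: assumes "1 \<le> u" "u \<le> t" "A \<in> sets borel"
  shows "{\<omega> \<in> space M. X u \<omega> \<in> A} \<in> sets (F t)"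
proof -
  have "X u -` A \<inter> space (F t) \<in> sets (F t)" using XmeasF[OF assms(1,2)] assms(3) by (rule measurable_sets)
  moreover have "X u -` A \<inter> space (F t) = {\<omega> \<in> space M. X u \<omega> \<in> A}" using spaceF by auto
  ultimately show ?thesis by simp
qed

lemma setM: assumes "1 \<le> u" "A \<in> sets borel"
  shows "{\<omega> \<in> space M. X u \<omega> \<in> A} \<in> events"
  using setF[OF assms(1) order_refl assms(2)] subalg[of u] unfolding subalgebra_def by auto

lemma setM_eq: "1 \<le> u \<Longrightarrow> {\<omega> \<in> space M. X u \<omega> = c} \<in> events"
  using setM[of u "{c}"] by auto

lemma S_countable: "countable S"
proof -
  have "S = (\<Union>n::nat. S \<inter> {-real n..real n})"
    by (auto, metis real_arch_simple abs_le_iff atLeastAtMost_iff minus_le_iff)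
  moreover have "finite (S \<inter> {-real n..real n})" for n
    using S_lf unfolding locally_finite_set_def by auto
  then have "countable (\<Union>n::nat. S \<inter> {-real n..real n})"
    by (intro countable_UN) (auto intro: countable_finite)
  ultimately show ?thesis by simp
qed

lemma H_meas: assumes "t \<ge> 1" "y \<in> S"
  shows "{\<omega> \<in> space M. X (t + m (X t \<omega>) y) \<omega> = y} \<in> events"
proof -
  have "{\<omega> \<in> space M. X (t + m (X t \<omega>) y) \<omega> = y} =
    (\<Union>x\<in>S. {\<omega> \<in> space M. X t \<omega> = x} \<inter> {\<omega> \<in> space M. X (t + m x y) \<omega> = y})"
    using vals[OF assms(1)] by auto
  also have "\<dots> \<in> events"
    using assms by (intro sets.countable_UN'' S_countable sets.Int setM_eq) auto
  finally show ?thesis .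
qed


lemma cond_bound:
  assumes t: "t \<ge> 1" and y: "y \<in> S" and G: "G \<in> sets (F t)"
    and d: "\<And>\<omega>. \<omega> \<in> G \<Longrightarrow> d \<le> \<phi> (X t \<omega>) y"
  shows "d * prob G \<le> prob (G \<inter> {\<omega> \<in> space M. X (t + m (X t \<omega>) y) \<omega> = y})"
proof -
  define H where "H = {\<omega> \<in> space M. X (t + m (X t \<omega>) y) \<omega> = y}"
  interpret sf: sigma_finite_subalgebra M "F t" by (rule sub)
  have Gm: "G \<in> events" using G subalg[of t] unfolding subalgebra_def by auto
  have Hm: "H \<in> events" unfolding H_def using H_meas[OF t y] .
  have ind: "indicator G \<in> borel_measurable (F t)" using G by simp
  have indH: "indicator H \<in> borel_measurable M" using Hm by simp
  have eq: "(\<lambda>x. indicator G x * indicator H x :: real) = indicator (G \<inter> H)"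
    by (auto simp: indicator_def)
  have int: "integrable M (\<lambda>x. indicator G x * indicator H x :: real)"
    unfolding eq using Gm Hm by (intro integrable_real_indicator) (auto simp: less_top[symmetric])
  note ce = sf.real_cond_exp_intg[OF int ind indH]
  have AEr: "AE \<omega> in M. real_cond_exp M (F t) (indicator H) \<omega> \<ge> \<phi> (X t \<omega>) y"
    using reach y t unfolding H_def by auto
  have "d * prob G = (\<integral>x. indicator G x * d \<partial>M)"
    using Gm by (simp add: mult.commute)
  also have "\<dots> \<le> (\<integral>x. indicator G x * real_cond_exp M (F t) (indicator H) x \<partial>M)"
  proof (rule integral_mono_AE)
    show "integrable M (\<lambda>x. indicator G x * d)" using Gm
      by (intro integrable_mult_left integrable_real_indicator) (auto simp: less_top[symmetric])
    show "integrable M (\<lambda>x. indicator G x * real_cond_exp M (F t) (indicator H) x)" using ce(1) .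
    show "AE x in M. indicator G x * d \<le> indicator G x * real_cond_exp M (F t) (indicator H) x"
      using AEr by eventually_elim (auto simp: indicator_def dest: d order_trans)
  qed
  also have "\<dots> = prob (G \<inter> H)" using ce(2) unfolding eq using Gm Hm by simp
  finally show ?thesis unfolding H_def .
qed


lemma hit:
  assumes K: "finite K" "K \<subseteq> S" and y: "y \<in> S"
  shows "AE \<omega> in M. \<not>((\<forall>u>s. X u \<omega> \<noteq> y) \<and> (\<exists>\<^sub>F t in sequentially. X t \<omega> \<in> K))"
proof (cases "K = {}")
  case True then show ?thesis by simp
next
  case False
  define \<delta> where "\<delta> = Min ((\<lambda>x. \<phi> x y) ` K)"
  define D where "D = Max ((\<lambda>x. m x y) ` K)"
  have \<delta>pos: "\<delta> > 0" using K False y mphi unfolding \<delta>_def by (subst Min_gr_iff) auto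
  have \<delta>le: "\<delta> \<le> \<phi> x y" if "x \<in> K" for x unfolding \<delta>_def using K that by (intro Min_le) auto
  have mle: "m x y \<le> D" if "x \<in> K" for x unfolding D_def using K that by (intro Max_ge) auto
  have mge: "1 \<le> m x y" if "x \<in> K" for x using K y mphi that by auto
  define N where "N t = {\<omega>\<in>space M. \<forall>u. s < u \<and> u \<le> t \<longrightarrow> X u \<omega> \<noteq> y}" for t
  define B where "B t = {\<omega>\<in>space M. X t \<omega> \<in> K}" for t
  have Ksets: "K \<in> sets borel" using K(1) by (intro borel_closed finite_imp_closed)
  have ysets: "{y} \<in> sets borel" by (intro borel_closed) simp
  have toM: "A \<in> events" if "A \<in> sets (F t)" for A t using that subalg[of t] unfolding subalgebra_def by auto
  have NF: "N t \<in> sets (F t)" for t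
  proof -
    have "N t = space (F t) - (\<Union>u\<in>{s<..t}. {\<omega> \<in> space M. X u \<omega> \<in> {y}})" unfolding N_def spaceF by auto
    also have "\<dots> \<in> sets (F t)"
      by (intro sets.Diff sets.top sets.finite_UN setF ysets) auto
    finally show ?thesis .
  qed
  have BF: "B t \<in> sets (F t)" if "t \<ge> 1" for t unfolding B_def using setF[OF that order_refl Ksets] .
  have key: "\<delta> * prob (N t \<inter> B t) \<le> prob (N t) - prob (N (t+D))" if st: "s < t" for t
  proof -
    have t1: "t \<ge> 1" using st by simp
    define H where "H = {\<omega> \<in> space M. X (t + m (X t \<omega>) y) \<omega> = y}"
    have G: "N t \<inter> B t \<in> sets (F t)" using NF BF[OF t1] by (rule sets.Int)
    have c: "\<delta> * prob (N t \<inter> B t) \<le> prob (N t \<inter> B t \<inter> H)"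
      unfolding H_def using \<delta>le by (intro cond_bound[OF t1 y G]) (auto simp: B_def)
    have incl: "N (t+D) \<subseteq> N t - (N t \<inter> B t \<inter> H)"
    proof
      fix \<omega> assume w: "\<omega> \<in> N (t+D)"
      show "\<omega> \<in> N t - (N t \<inter> B t \<inter> H)"
      proof (cases "\<omega> \<in> B t \<inter> H")
        case True
        then have "X t \<omega> \<in> K" "X (t + m (X t \<omega>) y) \<omega> = y" unfolding B_def H_def by auto
        moreover have "s < t + m (X t \<omega>) y" "t + m (X t \<omega>) y \<le> t + D" using st mle[OF \<open>X t \<omega> \<in> K\<close>] by auto
        ultimately show ?thesis using w unfolding N_def by auto
      qed (use w in \<open>auto simp: N_def\<close>)
    qed
    have NM: "N t \<in> events" "N (t+D) \<in> events" using NF toM by auto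
    have HM: "H \<in> events" unfolding H_def using H_meas[OF t1 y] .
    have BM: "B t \<in> events" using BF[OF t1] toM by auto
    have "prob (N (t+D)) \<le> prob (N t - (N t \<inter> B t \<inter> H))"
      using incl NM HM BM by (intro finite_measure_mono) auto
    also have "\<dots> = prob (N t) - prob (N t \<inter> B t \<inter> H)"
      using NM HM BM by (intro finite_measure_Diff) auto
    finally show ?thesis using c by linarith
  qed
  define a where "a j = prob (N (s+1+j))" for j
  define A where "A j = N (s+1+j) \<inter> B (s+1+j)" for j
  have AM: "A j \<in> events" for j unfolding A_def using NF BF toM by (intro sets.Int) auto
  have gsum: "(\<Sum>j<L. prob (A j)) \<le> D / \<delta>" for L
  proof -
    have "\<delta> * (\<Sum>j<L. prob (A j)) = (\<Sum>j<L. \<delta> * prob (A j))" by (simp add: sum_distrib_left)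
    also have "\<dots> \<le> (\<Sum>j<L. a j - a (j+D))"
    proof (intro sum_mono)
      fix j
      have "s+1+j+D = s+1+(j+D)" by simp
      then show "\<delta> * prob (A j) \<le> a j - a (j + D)"
        using key[of "s+1+j"] unfolding a_def A_def by (simp add: add.assoc)
    qed
    also have "\<dots> = (\<Sum>j<D. a j) - (\<Sum>j<D. a (j+L))"
    proof (induction L)
      case 0 then show ?case by simp
    next
      case (Suc L)
      have "(\<Sum>j<D. a (j+L)) - (\<Sum>j<D. a (j + Suc L)) = a L - a (D+L)"
        using sum_lessThan_telescope'[of "\<lambda>j. a (j+L)" D] by (simp add: sum_subtractf)
      then show ?case using Suc by (simp add: add.commute)
    qed
    also have "\<dots> \<le> (\<Sum>j<D. 1) - 0"
      by (intro diff_mono sum_mono sum_nonneg) (auto simp: a_def)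
    also have "\<dots> = real D" by simp
    finally show ?thesis using \<delta>pos by (simp add: pos_le_divide_eq mult.commute)
  qed
  have sm: "summable (\<lambda>j. prob (A j))"
    by (rule summableI_nonneg_bounded[OF measure_nonneg gsum])
  have AE1: "AE \<omega> in M. eventually (\<lambda>j. \<omega> \<in> space M - A j) sequentially"
    by (rule borel_cantelli_AE1[OF AM _ sm]) (simp add: less_top[symmetric])
  show ?thesis
    using AE1 AE_space
  proof eventually_elim
    case (elim \<omega>)
    show ?case
    proof
      assume h: "(\<forall>u>s. X u \<omega> \<noteq> y) \<and> (\<exists>\<^sub>F t in sequentially. X t \<omega> \<in> K)"
      from elim(1) obtain J where J: "\<And>j. j \<ge> J \<Longrightarrow> \<omega> \<notin> A j"
        unfolding eventually_sequentially by auto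
      from h obtain n where n: "n \<ge> s+1+J" "X n \<omega> \<in> K"
        unfolding frequently_sequentially by blast
      define j where "j = n - (s+1)"
      have nj: "n = s+1+j" "j \<ge> J" using n unfolding j_def by auto
      have "\<omega> \<in> A j" unfolding A_def nj(1)[symmetric] N_def B_def using h n elim(2) by auto
      then show False using J nj(2) by auto
    qed
  qed
qed

lemma hit_io:
  assumes "finite K" "K \<subseteq> S" "y \<in> S"
  shows "AE \<omega> in M. (\<exists>\<^sub>F t in sequentially. X t \<omega> \<in> K) \<longrightarrow> (\<exists>\<^sub>F t in sequentially. X t \<omega> = y)"
proof -
  have "AE \<omega> in M. \<forall>s::nat. \<not>((\<forall>u>s. X u \<omega> \<noteq> y) \<and> (\<exists>\<^sub>F t in sequentially. X t \<omega> \<in> K))"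
    unfolding AE_all_countable using hit[OF assms] by blast
  then show ?thesis
  proof eventually_elim
    case (elim \<omega>)
    show ?case
    proof
      assume "\<exists>\<^sub>F t in sequentially. X t \<omega> \<in> K"
      then have "\<forall>s. \<exists>u>s. X u \<omega> = y" using elim by blast
      then show "\<exists>\<^sub>F t in sequentially. X t \<omega> = y"
        unfolding frequently_sequentially by (meson less_imp_le)
    qed
  qed
qed

end


lemma ret_ge: "ret_time X n \<omega> = enat s \<Longrightarrow> Suc n \<le> s"
proof (induction n arbitrary: s)
  case 0 then show ?case by (simp add: one_enat_def)
next
  case (Suc n)
  then obtain r where r: "ret_time X n \<omega> = enat r"
    by (cases "ret_time X n \<omega>") auto
  with Suc.prems have ex: "\<exists>t>r. X t \<omega> = 0" and s: "s = (LEAST t. t > r \<and> X t \<omega> = 0)"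
    by (auto split: if_splits)
  from ex have "s > r" unfolding s by (metis (mono_tags, lifting) LeastI)
  with Suc.IH[OF r] show ?case by simp
qed

lemma ret_succ_char:
  "ret_time X (Suc n) \<omega> = enat k \<longleftrightarrow>
    (\<exists>s<k. ret_time X n \<omega> = enat s \<and> X k \<omega> = 0 \<and> (\<forall>t. s < t \<and> t < k \<longrightarrow> X t \<omega> \<noteq> 0))"
proof (cases "ret_time X n \<omega>")
  case (enat r)
  show ?thesis
  proof
    assume h: "ret_time X (Suc n) \<omega> = enat k"
    with enat have ex: "\<exists>t>r. X t \<omega> = 0" and k: "k = (LEAST t. t > r \<and> X t \<omega> = 0)"
      by (auto split: if_splits)
    have "k > r \<and> X k \<omega> = 0" unfolding k using ex by (metis (mono_tags, lifting) LeastI)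
    moreover have "\<forall>t. r < t \<and> t < k \<longrightarrow> X t \<omega> \<noteq> 0" unfolding k using not_less_Least by blast
    ultimately show "\<exists>s<k. ret_time X n \<omega> = enat s \<and> X k \<omega> = 0 \<and> (\<forall>t. s < t \<and> t < k \<longrightarrow> X t \<omega> \<noteq> 0)"
      using enat by auto
  next
    assume "\<exists>s<k. ret_time X n \<omega> = enat s \<and> X k \<omega> = 0 \<and> (\<forall>t. s < t \<and> t < k \<longrightarrow> X t \<omega> \<noteq> 0)"
    then have h: "r < k" "X k \<omega> = 0" "\<forall>t. r < t \<and> t < k \<longrightarrow> X t \<omega> \<noteq> 0" using enat by auto
    have "(LEAST t. t > r \<and> X t \<omega> = 0) = k"
      by (rule Least_equality) (use h in \<open>auto simp: not_less[symmetric]\<close>)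
    then show "ret_time X (Suc n) \<omega> = enat k" using enat h by auto
  qed
qed simp

lemma ret_fin_Suc: "ret_time X (Suc n) \<omega> \<noteq> \<infinity> \<Longrightarrow> ret_time X n \<omega> \<noteq> \<infinity>"
  by (cases "ret_time X n \<omega>") auto

lemma exc_fin: "exc_dur X n \<omega> < \<infinity> \<longleftrightarrow> ret_time X n \<omega> \<noteq> \<infinity>"
  unfolding exc_dur_def
  by (cases "ret_time X n \<omega>"; cases "ret_time X (n-1) \<omega>") auto

lemma freq_ret: "(\<exists>\<^sub>F t in sequentially. X t \<omega> = 0) \<Longrightarrow> ret_time X n \<omega> \<noteq> \<infinity>"
proof (induction n)
  case 0 then show ?case by (simp add: one_enat_def)
next
  case (Suc n)
  then obtain r where r: "ret_time X n \<omega> = enat r" by auto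
  from Suc.prems obtain t where "t \<ge> Suc r" "X t \<omega> = 0" unfolding frequently_sequentially by blast
  then have "\<exists>t>r. X t \<omega> = 0" by (intro exI[of _ t]) auto
  then show ?case using r by simp
qed

lemma ret_freq: assumes "\<And>n. ret_time X n \<omega> \<noteq> \<infinity>" shows "\<exists>\<^sub>F t in sequentially. X t \<omega> = 0"
  unfolding frequently_sequentially
proof
  fix N
  have "ret_time X (Suc N) \<omega> \<noteq> \<infinity>" by (rule assms)
  then obtain k where k: "ret_time X (Suc N) \<omega> = enat k"
    by (cases "ret_time X (Suc N) \<omega>") (simp_all del: ret_time.simps)
  then have "X k \<omega> = 0" using ret_succ_char[THEN iffD1, OF k] by blast
  moreover have "k \<ge> N" using ret_ge[OF k] by simp
  ultimately show "\<exists>n\<ge>N. X n \<omega> = 0" by blast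
qed

context setting
begin

lemma ret_meas: "{\<omega> \<in> space M. ret_time X n \<omega> = enat k} \<in> events"
proof (induction n arbitrary: k)
  case 0
  show ?case by (cases "k = 1") (auto simp: one_enat_def)
next
  case (Suc n)
  have "{\<omega> \<in> space M. ret_time X (Suc n) \<omega> = enat k} =
    (\<Union>s\<in>{1..<k}. {\<omega> \<in> space M. ret_time X n \<omega> = enat s} \<inter> {\<omega> \<in> space M. X k \<omega> = 0} \<inter>
       (space M - (\<Union>t\<in>{s<..<k}. {\<omega> \<in> space M. X t \<omega> = 0})))"
    unfolding ret_succ_char
  proof (intro set_eqI iffI)
    fix \<omega> assume "\<omega> \<in> {\<omega> \<in> space M. \<exists>s<k. ret_time X n \<omega> = enat s \<and> X k \<omega> = 0 \<and> (\<forall>t. s < t \<and> t < k \<longrightarrow> X t \<omega> \<noteq> 0)}"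
    then obtain s where "\<omega> \<in> space M" "s < k" "ret_time X n \<omega> = enat s" "X k \<omega> = 0" "\<forall>t. s < t \<and> t < k \<longrightarrow> X t \<omega> \<noteq> 0"
      by auto
    moreover have "s \<ge> 1" using ret_ge[OF \<open>ret_time X n \<omega> = enat s\<close>] by simp
    ultimately show "\<omega> \<in> (\<Union>s\<in>{1..<k}. {\<omega> \<in> space M. ret_time X n \<omega> = enat s} \<inter> {\<omega> \<in> space M. X k \<omega> = 0} \<inter>
       (space M - (\<Union>t\<in>{s<..<k}. {\<omega> \<in> space M. X t \<omega> = 0})))" by auto
  qed auto
  also have "\<dots> \<in> events"
    by (intro sets.finite_UN sets.Int sets.Diff sets.top Suc.IH setM_eq) auto
  finally show ?case .
qed

lemma R_meas: "{\<omega> \<in> space M. ret_time X n \<omega> \<noteq> \<infinity>} \<in> events"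
proof -
  have "{\<omega> \<in> space M. ret_time X n \<omega> \<noteq> \<infinity>} = (\<Union>k. {\<omega> \<in> space M. ret_time X n \<omega> = enat k})" by auto
  then show ?thesis using ret_meas by auto
qed

end


context setting
begin

lemma limsup_inf:
  assumes unb: "\<not> bdd_above S" and nn: "S \<subseteq> {0..}"
  shows "AE \<omega> in M. limsup (\<lambda>t. ereal (X t \<omega>)) = \<infinity>"
proof -
  have ex: "\<exists>y. y \<in> S \<and> y > real n" for n::nat using unb unfolding bdd_above_def by (meson not_le)
  define yy where "yy n = (SOME y. y \<in> S \<and> y > real n)" for n
  have yy: "yy n \<in> S" "yy n > real n" for n using someI_ex[OF ex[of n]] unfolding yy_def by auto
  define K where "K n = S \<inter> {0..real n}" for n :: nat
  have Kf: "finite (K n)" for n using S_lf unfolding locally_finite_set_def K_def by auto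
  have "AE \<omega> in M. \<forall>n. (\<exists>\<^sub>F t in sequentially. X t \<omega> \<in> K n) \<longrightarrow> (\<exists>\<^sub>F t in sequentially. X t \<omega> = yy n)"
    unfolding AE_all_countable using hit_io[OF Kf _ yy(1)] K_def by auto
  then show ?thesis using AE_space
  proof eventually_elim
    case (elim \<omega>)
    show ?case
    proof (rule ccontr)
      assume "limsup (\<lambda>t. ereal (X t \<omega>)) \<noteq> \<infinity>"
      then obtain n::nat where "limsup (\<lambda>t. ereal (X t \<omega>)) < ereal (real n)"
        using less_PInf_Ex_of_nat by blast
      then have ev: "eventually (\<lambda>t. ereal (X t \<omega>) < ereal (real n)) sequentially"
        by (rule Limsup_lessD)
      have ev2: "eventually (\<lambda>t. X t \<omega> \<in> K n \<and> X t \<omega> < real n) sequentially"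
        using ev eventually_ge_at_top[of "1::nat"]
      proof eventually_elim
        case (elim t)
        then show ?case using vals[of t \<omega>] \<open>\<omega> \<in> space M\<close> nn by (auto simp: K_def)
      qed
      have "\<exists>\<^sub>F t in sequentially. X t \<omega> \<in> K n"
        by (rule eventually_frequently[OF trivial_limit_sequentially]) (use ev2 in \<open>auto elim: eventually_mono\<close>)
      then have fr: "\<exists>\<^sub>F t in sequentially. X t \<omega> = yy n" using elim(1) by blast
      from ev2 obtain N0 where N0: "\<And>t. t \<ge> N0 \<Longrightarrow> X t \<omega> < real n" unfolding eventually_sequentially by blast
      from fr obtain t where "t \<ge> N0" "X t \<omega> = yy n" unfolding frequently_sequentially by blast
      with N0 yy(2)[of n] show False by fastforce
    qed
  qed
qed

lemma dich:
  assumes nn: "S \<subseteq> {0..}" and S0: "0 \<in> S"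
    and hyp: "\<forall>n\<ge>1. measure M {\<omega> \<in> space M. exc_dur X (n + 1) \<omega> < \<infinity> \<and> ret_time X n \<omega> < \<infinity>}
              / measure M {\<omega> \<in> space M. ret_time X n \<omega> < \<infinity>}
            = measure M {\<omega> \<in> space M. exc_dur X 1 \<omega> < \<infinity>}"
  shows "let p = measure M {\<omega> \<in> space M. exc_dur X 1 \<omega> < \<infinity>};
          C1 = (p < 1 \<and> (AE \<omega> in M. filterlim (\<lambda>t. X t \<omega>) at_top sequentially));
          C2 = (p = 1 \<and> (AE \<omega> in M. liminf (\<lambda>t. ereal (X t \<omega>)) = 0))
      in (C1 \<or> C2) \<and> \<not> (C1 \<and> C2)"
proof -
  have lt: "(x::enat) < \<infinity> \<longleftrightarrow> x \<noteq> \<infinity>" for x by (cases x) auto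
  define R where "R n = {\<omega> \<in> space M. ret_time X n \<omega> \<noteq> \<infinity>}" for n
  define p where "p = prob {\<omega> \<in> space M. exc_dur X 1 \<omega> < \<infinity>}"
  have Rm: "R n \<in> events" for n unfolding R_def by (rule R_meas)
  have "{\<omega> \<in> space M. exc_dur X 1 \<omega> < \<infinity>} = R 1" unfolding R_def using exc_fin[of X 1] by blast
  then have p_eq: "p = prob (R 1)" unfolding p_def by simp
  have set2: "{\<omega> \<in> space M. exc_dur X (n+1) \<omega> < \<infinity> \<and> ret_time X n \<omega> < \<infinity>} = R (n+1)" for n
  proof -
    have a: "\<And>\<omega>. exc_dur X (n+1) \<omega> < \<infinity> \<longleftrightarrow> ret_time X (n+1) \<omega> \<noteq> \<infinity>" by (rule exc_fin)
    have b: "\<And>\<omega>. ret_time X (n+1) \<omega> \<noteq> \<infinity> \<Longrightarrow> ret_time X n \<omega> \<noteq> \<infinity>"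
      using ret_fin_Suc[of X n] by simp
    show ?thesis unfolding R_def using a b lt by blast
  qed
  have set1: "{\<omega> \<in> space M. ret_time X n \<omega> < \<infinity>} = R n" for n unfolding R_def lt ..
  have ratio: "prob (R (Suc n)) / prob (R n) = p" if "n \<ge> 1" for n
    using hyp that unfolding set1 set2 p_def by auto
  have Rsub: "R (Suc n) \<subseteq> R n" for n unfolding R_def using ret_fin_Suc[of X n] by auto
  have mono: "prob (R (Suc n)) \<le> prob (R n)" for n using Rsub Rm by (intro finite_measure_mono) auto
  have pw: "prob (R (Suc n)) = p ^ Suc n" for n
  proof (induction n)
    case 0 then show ?case using p_eq by simp
  next
    case (Suc n)
    have r: "prob (R (Suc (Suc n))) / prob (R (Suc n)) = p" using ratio[of "Suc n"] by simp
    show ?case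
    proof (cases "prob (R (Suc n)) = 0")
      case True
      then have "p = 0" using r by simp
      moreover have "prob (R (Suc (Suc n))) = 0" using mono[of "Suc n"] True measure_nonneg[of M "R (Suc (Suc n))"] by linarith
      ultimately show ?thesis by simp
    next
      case False
      then have "prob (R (Suc (Suc n))) = p * prob (R (Suc n))" using r by (simp add: field_simps)
      then show ?thesis using Suc.IH by simp
    qed
  qed
  have p01: "0 \<le> p" "p \<le> 1" unfolding p_def by auto
  define K where "K n = S \<inter> {0..real n}" for n :: nat
  have Kf: "finite (K n)" for n using S_lf unfolding locally_finite_set_def K_def by auto
  have C1: "AE \<omega> in M. filterlim (\<lambda>t. X t \<omega>) at_top sequentially" if "p < 1"
  proof -
    define N where "N = (\<Inter>n. R n)"
    have Nm: "N \<in> events" unfolding N_def using Rm by auto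
    have lim: "(\<lambda>n. p ^ Suc n) \<longlonglongrightarrow> 0"
      using LIMSEQ_Suc[OF LIMSEQ_power_zero[of p]] that p01 by simp
    have "prob N \<le> 0"
    proof (rule LIMSEQ_le_const[OF lim], intro exI allI impI)
      fix n
      have "prob N \<le> prob (R (Suc n))" using Nm Rm by (intro finite_measure_mono) (auto simp: N_def)
      then show "prob N \<le> p ^ Suc n" using pw by simp
    qed
    then have "prob N = 0" using measure_nonneg[of M N] by linarith
    then have Nnull: "N \<in> null_sets M" using Nm by (simp add: null_sets_def emeasure_eq_measure)
    have AE0: "AE \<omega> in M. \<not> (\<exists>\<^sub>F t in sequentially. X t \<omega> = 0)"
      by (rule AE_I'[OF Nnull]) (auto simp: N_def R_def dest: freq_ret)
    have AEK: "AE \<omega> in M. \<forall>n. (\<exists>\<^sub>F t in sequentially. X t \<omega> \<in> K n) \<longrightarrow> (\<exists>\<^sub>F t in sequentially. X t \<omega> = 0)"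
      unfolding AE_all_countable using hit_io[OF Kf _ S0] K_def by auto
    show ?thesis using AE0 AEK AE_space
    proof eventually_elim
      case (elim \<omega>)
      show ?case unfolding filterlim_at_top
      proof
        fix Z :: real
        obtain n :: nat where n: "Z \<le> real n" using real_arch_simple by blast
        have "\<not> (\<exists>\<^sub>F t in sequentially. X t \<omega> \<in> K n)" using elim by blast
        then have ev: "eventually (\<lambda>t. X t \<omega> \<notin> K n) sequentially" unfolding frequently_def by simp
        show "eventually (\<lambda>t. Z \<le> X t \<omega>) sequentially"
          using ev eventually_ge_at_top[of "1::nat"]
        proof eventually_elim
          case (elim t)
          then show ?case using vals[of t \<omega>] \<open>\<omega> \<in> space M\<close> nn n by (auto simp: K_def)
        qed
      qed
    qed
  qed
  have C2: "AE \<omega> in M. liminf (\<lambda>t. ereal (X t \<omega>)) = 0" if "p = 1"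
  proof -
    have "AE \<omega> in M. \<forall>n. \<omega> \<in> R (Suc n)"
      unfolding AE_all_countable using pw that by (auto intro: AE_prob_1)
    then show ?thesis using AE_space
    proof eventually_elim
      case (elim \<omega>)
      have "ret_time X n \<omega> \<noteq> \<infinity>" for n
        using elim(1) by (cases n) (auto simp: R_def one_enat_def)
      then have fr: "\<exists>\<^sub>F t in sequentially. X t \<omega> = 0" by (rule ret_freq)
      have ge: "0 \<le> liminf (\<lambda>t. ereal (X t \<omega>))"
      proof (rule Liminf_bounded)
        show "eventually (\<lambda>t. 0 \<le> ereal (X t \<omega>)) sequentially"
          using eventually_ge_at_top[of "1::nat"]
          by eventually_elim (use vals[of _ \<omega>] \<open>\<omega> \<in> space M\<close> nn in auto)
      qed
      have le: "\<not> 0 < liminf (\<lambda>t. ereal (X t \<omega>))"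
      proof
        assume "0 < liminf (\<lambda>t. ereal (X t \<omega>))"
        then have "eventually (\<lambda>t. 0 < ereal (X t \<omega>)) sequentially"
          using le_Liminf_iff[of "liminf (\<lambda>t. ereal (X t \<omega>))" sequentially "\<lambda>t. ereal (X t \<omega>)"] by (metis order_refl)
        then have "eventually (\<lambda>t. X t \<omega> \<noteq> 0) sequentially" by (auto elim: eventually_mono)
        then show False using fr unfolding frequently_def by simp
      qed
      show ?case using ge le by simp
    qed
  qed
  show ?thesis
    unfolding Let_def p_def[symmetric]
    using C1 C2 p01 by (cases "p < 1") auto
qed

end

theorem proposition2p1:
  fixes M :: "'a measure" and F :: "nat \<Rightarrow> 'a measure"
    and X :: "nat \<Rightarrow> 'a \<Rightarrow> real" and S :: "real set"
  assumes "prob_space M"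
    and S_lf: "locally_finite_set S"
    and S_unb: "\<not> bdd_above S"
    and S_nonneg: "S \<subseteq> {0..}"
    and S0: "0 \<in> S"
    and filt: "filtration (space M) F"
    and sub: "\<And>t. sigma_finite_subalgebra M (F t)"
    and adapted: "\<And>t. t \<ge> 1 \<Longrightarrow> X t \<in> borel_measurable (F t)"
    and vals: "\<And>t \<omega>. t \<ge> 1 \<Longrightarrow> \<omega> \<in> space M \<Longrightarrow> X t \<omega> \<in> S"
    and start: "measure M {\<omega> \<in> space M. X 1 \<omega> = 0} = 1"
    and reach: "\<exists>(m :: real \<Rightarrow> real \<Rightarrow> nat) (\<phi> :: real \<Rightarrow> real \<Rightarrow> real).
        (\<forall>x\<in>S. \<forall>y\<in>S. m x y \<ge> 1 \<and> \<phi> x y > 0) \<and>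
        (\<forall>y\<in>S. \<forall>t\<ge>1. AE \<omega> in M.
            real_cond_exp M (F t)
              (\<lambda>\<omega>'. indicator {\<omega>'' \<in> space M. X (t + m (X t \<omega>'') y) \<omega>'' = y} \<omega>') \<omega>
            \<ge> \<phi> (X t \<omega>) y)"
  shows "(AE \<omega> in M. limsup (\<lambda>t. ereal (X t \<omega>)) = \<infinity>) \<and>
    ((\<forall>n\<ge>1. measure M {\<omega> \<in> space M. exc_dur X (n + 1) \<omega> < \<infinity> \<and> ret_time X n \<omega> < \<infinity>}
              / measure M {\<omega> \<in> space M. ret_time X n \<omega> < \<infinity>}
            = measure M {\<omega> \<in> space M. exc_dur X 1 \<omega> < \<infinity>})
     \<longrightarrow>
     (let p = measure M {\<omega> \<in> space M. exc_dur X 1 \<omega> < \<infinity>};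
          C1 = (p < 1 \<and> (AE \<omega> in M. filterlim (\<lambda>t. X t \<omega>) at_top sequentially));
          C2 = (p = 1 \<and> (AE \<omega> in M. liminf (\<lambda>t. ereal (X t \<omega>)) = 0))
      in (C1 \<or> C2) \<and> \<not> (C1 \<and> C2)))"
  proof -
  interpret prob_space M by fact
  from reach obtain m :: "real \<Rightarrow> real \<Rightarrow> nat" and \<phi> :: "real \<Rightarrow> real \<Rightarrow> real" where
    mphi: "\<forall>x\<in>S. \<forall>y\<in>S. m x y \<ge> 1 \<and> \<phi> x y > 0" and
    r: "\<forall>y\<in>S. \<forall>t\<ge>1. AE \<omega> in M.
            real_cond_exp M (F t)
              (\<lambda>\<omega>'. indicator {\<omega>'' \<in> space M. X (t + m (X t \<omega>'') y) \<omega>'' = y} \<omega>') \<omega>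
            \<ge> \<phi> (X t \<omega>) y"
    by blast
  interpret st: setting M F X S m \<phi>
    apply (rule setting.intro[OF assms(1)])
    apply (rule setting_axioms.intro)
          apply (fact S_lf)
         apply (fact filt)
        apply (fact sub)
       apply (fact adapted)
      apply (fact vals)
     apply (fact mphi)
    apply (fact r)
    done
  have 1: "AE \<omega> in M. limsup (\<lambda>t. ereal (X t \<omega>)) = \<infinity>" by (rule st.limsup_inf[OF S_unb S_nonneg])
  show ?thesis
    apply (rule conjI[OF 1])
    apply (rule impI)
    apply (erule st.dich[OF S_nonneg S0])
    done
qed

end
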